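(* Let $\sigma$ be a regular $k$-gon in $\mathbb{R}^2$, $k\ge 4$, with diameter $w$ satisfying $2^j\le w<2^{j+1}$ for some integer $j\ge 0$, and let $\mathcal{K}_\sigma$ be its shrunk set. Then $\sigma=\bigcup_{\sigma'\in\mathcal{K}_\sigma}\sigma'$.
   Context: The diameter of a regular $k$-gon is the diameter of its smallest enclosing disk. Shrunk set: if $w=2^j$, then $\mathcal{K}_\sigma=\{\sigma\}$. Otherwise, let $\sigma'_0$ be the concentric scaled copy of $\sigma$ of diameter $2^j$, let $c_1,\dots,c_k$ be the corners of $\sigma$, and for each $i\in[k]$ let $\sigma'_i$ be the image of $\sigma$ under the homothety with center $c_i$ and ratio $2^j/w$ (so $\sigma'_i$ is a translate of $\sigma'_0$ contained in $\sigma$ having $c_i$ as a corner); then $\mathcal{K}_\sigma=\{\sigma'_0,\sigma'_1,\dots,\sigma'_k\}$. *)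

theory Defs
  imports "HOL-Analysis.Analysis"
begin

text \<open>The plane R^2 is modelled by the type complex (a 2-dimensional euclidean space).\<close>

definition reg_vertex :: "nat \<Rightarrow> complex \<Rightarrow> real \<Rightarrow> real \<Rightarrow> nat \<Rightarrow> complex" where
  "reg_vertex k c r theta i = c + complex_of_real r * cis (theta + 2 * pi * real i / real k)"

definition regular_polygon :: "nat \<Rightarrow> complex \<Rightarrow> real \<Rightarrow> real \<Rightarrow> complex set" where
  "regular_polygon k c r theta = convex hull (reg_vertex k c r theta ` {..<k})"

definition enclosing_diameter :: "complex set \<Rightarrow> real" where
  "enclosing_diameter S = Inf {2 * e | x e. S \<subseteq> cball x e}"

definition homothety :: "complex \<Rightarrow> real \<Rightarrow> complex \<Rightarrow> complex" where
  "homothety p lam x = p + complex_of_real lam * (x - p)"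

definition shrunk_set :: "nat \<Rightarrow> complex \<Rightarrow> real \<Rightarrow> real \<Rightarrow> nat \<Rightarrow> complex set set" where
  "shrunk_set k c r theta j =
     (let \<sigma> = regular_polygon k c r theta;
          w = enclosing_diameter \<sigma>;
          lam = (2::real) ^ j / w
      in if w = 2 ^ j then {\<sigma>}
         else insert (homothety c lam ` \<sigma>)
                ((\<lambda>i. homothety (reg_vertex k c r theta i) lam ` \<sigma>) ` {..<k}))"

end

theory Submission imports Defs begin
lemma tri_in:
  fixes S :: "complex set"
  assumes "convex S" "a \<in> S" "b \<in> S" "d \<in> S" "0 \<le> p" "0 \<le> q" "p + q \<le> 1"
  shows "a + complex_of_real p * (b - a) + complex_of_real q * (d - a) \<in> S"
proof -
  have "convex hull {a,b,d} \<subseteq> S" using assms by (simp add: hull_minimal)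
  moreover have "a + complex_of_real p * (b - a) + complex_of_real q * (d - a)
      = (1 - p - q) *\<^sub>R a + p *\<^sub>R b + q *\<^sub>R d"
    by (simp add: scaleR_conv_of_real algebra_simps)
  moreover have "(1 - p - q) *\<^sub>R a + p *\<^sub>R b + q *\<^sub>R d \<in> convex hull {a,b,d}"
    unfolding convex_hull_3 using assms by force
  ultimately show ?thesis by auto
qed

lemma cover:
  fixes S :: "complex set"
  assumes S: "convex S" "c \<in> S" "v \<in> S" "w \<in> S" "c + (w - v) / 2 \<in> S"
    and ab: "0 \<le> b" "b \<le> a" "a + b \<le> 1" and lam: "1/2 < lam" "lam \<le> 1"
    and x: "x = c + complex_of_real a * (v - c) + complex_of_real b * (w - c)"
  shows "x \<in> homothety c lam ` S \<or> x \<in> homothety v lam ` S"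
proof (cases "a + b \<le> lam")
  case True
  define y where "y = c + complex_of_real (a/lam) * (v - c) + complex_of_real (b/lam) * (w - c)"
  have "y \<in> S" unfolding y_def
    by (rule tri_in) (use S ab lam True in \<open>auto simp: field_simps\<close>)
  moreover have "homothety c lam y = x"
    unfolding y_def x homothety_def using lam by (simp add: field_simps)
  ultimately show ?thesis by blast
next
  case False
  define y where "y = c + complex_of_real ((lam+a-1)/lam) * (v - c) + complex_of_real (b/lam) * (w - c)"
  have hx: "homothety v lam y = x"
    unfolding y_def x homothety_def using lam by (simp add: field_simps)
  have "y \<in> S"
  proof (cases "1 - lam \<le> a")
    case True
    show ?thesis unfolding y_def
      by (rule tri_in) (use S ab lam True in \<open>auto simp: field_simps\<close>)
  next
    case F2: False
    define s where "s = 2*(1-lam-a)/lam"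
    define t where "t = (lam+a+b-1)/lam"
    have "y = c + complex_of_real s * ((c + (w - v) / 2) - c) + complex_of_real t * (w - c)"
      unfolding y_def s_def t_def using lam by (simp add: field_simps)
    also have "\<dots> \<in> S"
    proof (rule tri_in)
      have "s + t = (1 - lam - a + b) / lam" unfolding s_def t_def using lam by (simp add: field_simps)
      also have "\<dots> \<le> 1" using lam ab by (simp add: divide_le_eq_1)
      finally show "s + t \<le> 1" .
    qed (use S ab lam False F2 in \<open>auto simp: s_def t_def\<close>)
    finally show ?thesis .
  qed
  with hx show ?thesis by blast
qed

lemma rv_alt: "reg_vertex k c r theta i = c + complex_of_real r * cis (theta + real i * (2*pi/real k))"
  unfolding reg_vertex_def by (simp add: field_simps)

lemma cis_shift_int: "n \<in> \<int> \<Longrightarrow> cis (a + 2*pi*n) = cis a"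
  by (metis cis_mult cis_multiple_2pi mult.right_neutral)

lemma rv_mod: assumes "k > 0" shows "reg_vertex k c r theta (m mod k) = reg_vertex k c r theta m"
proof -
  have "real m * (2*pi/real k) = real (m mod k) * (2*pi/real k) + 2*pi*real (m div k)"
  proof -
    have "real m = real (m mod k) + real k * real (m div k)"
      by (metis of_nat_add of_nat_mult mod_mult_div_eq add.commute mult.commute)
    thus ?thesis using assms by (simp add: field_simps)
  qed
  hence "cis (theta + real m * (2*pi/real k)) = cis (theta + real (m mod k) * (2*pi/real k) + 2*pi*real (m div k))"
    by (simp add: algebra_simps)
  also have "\<dots> = cis (theta + real (m mod k) * (2*pi/real k))"
    by (rule cis_shift_int) simp
  finally show ?thesis unfolding rv_alt by simp
qed

lemma cos_le_aux:
  assumes "0 \<le> a" "a \<le> pi" "a \<le> y" "y \<le> 2*pi - a"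
  shows "cos y \<le> cos a"
proof (cases "y \<le> pi")
  case True thus ?thesis using assms cos_monotone_0_pi_le by auto
next
  case False
  have "cos y = cos (2*pi - y)" by (simp add: cos_diff)
  also have "\<dots> \<le> cos a" using assms False by (intro cos_monotone_0_pi_le) auto
  finally show ?thesis .
qed

lemma inner_cis: "inner (complex_of_real r * cis A) (cis B) = r * cos (A - B)"
  by (simp add: inner_complex_def cos_diff algebra_simps)

lemma halfplane:
  assumes k: "k \<ge> 3" and r: "r \<ge> 0" and m: "m < k"
    and z: "z \<in> regular_polygon k c r theta"
  shows "inner (z - c) (cis (theta + (real m + 1/2) * (2*pi/real k))) \<le> r * cos (pi / real k)"
proof -
  define u where "u = cis (theta + (real m + 1/2) * (2*pi/real k))"
  define H where "H = {x. inner u x \<le> r * cos (pi / real k) + inner u c}"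
  have cH: "convex H" unfolding H_def by (rule convex_halfspace_le)
  have vH: "reg_vertex k c r theta j \<in> H" if j: "j < k" for j
  proof -
    have kp: "real k > 0" using k by simp
    have "inner (reg_vertex k c r theta j - c) u
        = r * cos ((real j - real m - 1/2) * (2*pi/real k))"
      unfolding rv_alt u_def by (simp add: inner_cis algebra_simps)
    also have "cos ((real j - real m - 1/2) * (2*pi/real k))
        = cos (\<bar>real j - real m - 1/2\<bar> * (2*pi/real k))"
      by (metis abs_mult abs_of_pos cos_abs_real kp divide_pos_pos pi_gt_zero zero_less_numeral mult_pos_pos)
    also have "\<dots> \<le> cos (pi / real k)"
    proof (rule cos_le_aux)
      have "\<bar>real j - real m - 1/2\<bar> \<ge> 1/2"
      proof (cases "j \<le> m")
        case True thus ?thesis by simp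
      next
        case False thus ?thesis by simp
      qed
      hence "\<bar>real j - real m - 1/2\<bar> * (2*pi/real k) \<ge> 1/2 * (2*pi/real k)"
        using kp by (intro mult_right_mono) auto
      thus "pi / real k \<le> \<bar>real j - real m - 1/2\<bar> * (2*pi/real k)" by simp
      have "\<bar>real j - real m - 1/2\<bar> \<le> real k - 1/2" using j m by linarith
      hence "\<bar>real j - real m - 1/2\<bar> * (2*pi/real k) \<le> (real k - 1/2) * (2*pi/real k)"
        using kp by (intro mult_right_mono) auto
      also have "\<dots> = 2*pi - pi / real k" using kp by (simp add: field_simps)
      finally show "\<bar>real j - real m - 1/2\<bar> * (2*pi/real k) \<le> 2*pi - pi / real k" .
      show "0 \<le> pi / real k" using kp by simp
      show "pi / real k \<le> pi" using k by (simp add: field_simps)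
    qed
    finally have "inner (reg_vertex k c r theta j - c) u \<le> r * cos (pi / real k)"
      using r by (simp add: mult_left_mono)
    thus ?thesis unfolding H_def by (simp add: inner_diff_right inner_commute)
  qed
  have "regular_polygon k c r theta \<subseteq> H"
    unfolding regular_polygon_def using cH vH by (intro hull_minimal) auto
  with z have "z \<in> H" by auto
  thus ?thesis unfolding H_def u_def by (simp add: inner_diff_left inner_commute)
qed

lemma sin_cis_identity:
  "complex_of_real (sin f) * cis (p + s*f) = complex_of_real (sin ((1-s)*f)) * cis p + complex_of_real (sin (s*f)) * cis (p + f)"
proof -
  have e: "(1-s)*f = f - s*f" by (simp add: algebra_simps)
  show ?thesis unfolding e
    by (simp add: complex_eq_iff sin_diff cos_add sin_add algebra_simps)
qed

lemma sector:
  assumes k: "k \<ge> 4" and r: "r > 0"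
  shows "\<exists>m<k. \<exists>p q. p \<ge> 0 \<and> q \<ge> 0 \<and>
     z = c + complex_of_real p * (reg_vertex k c r theta m - c) + complex_of_real q * (reg_vertex k c r theta (Suc m) - c) \<and>
     inner (z - c) (cis (theta + (real m + 1/2) * (2*pi/real k))) = (p + q) * (r * cos (pi / real k))"
proof -
  define f where "f = 2*pi/real k"
  have kp: "real k > 0" using k by simp
  have f0: "f > 0" unfolding f_def using kp by simp
  have fk: "f * real k = 2*pi" unfolding f_def using kp by simp
  have fpi: "f \<le> pi/2"
  proof -
    have "2*pi/real k \<le> 2*pi/4" using k by (intro divide_left_mono) auto
    thus ?thesis unfolding f_def by simp
  qed
  have sinf: "sin f > 0" using f0 fpi by (intro sin_gt_zero) auto
  define rho where "rho = cmod (z - c)"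
  define al where "al = Arg (z - c)"
  have zc: "z - c = complex_of_real rho * cis al" unfolding rho_def al_def
    by (metis rcis_cmod_Arg rcis_def)
  define t where "t = (al - theta) / f"
  define m0 where "m0 = floor t"
  define s where "s = t - of_int m0"
  have s01: "0 \<le> s" "s < 1" unfolding s_def m0_def by linarith+
  define m where "m = nat (m0 mod int k)"
  have mk: "m < k" unfolding m_def using kp by (simp add: nat_less_iff)
  have m0eq: "real_of_int m0 = real m + real k * real_of_int (m0 div int k)"
  proof -
    have "m0 = m0 mod int k + int k * (m0 div int k)" by simp
    moreover have "m0 mod int k = int m" unfolding m_def using kp by simp
    ultimately have "m0 = int m + int k * (m0 div int k)" by simp
    hence "real_of_int m0 = real_of_int (int m + int k * (m0 div int k))" by simp
    thus ?thesis by simp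
  qed
  define psi where "psi = theta + real m * f"
  have "al = theta + (real_of_int m0 + s) * f" unfolding s_def t_def using f0 by (simp add: field_simps)
  also have "\<dots> = psi + s * f + 2*pi*real_of_int (m0 div int k)"
    unfolding psi_def m0eq using fk by (simp add: algebra_simps)
  finally have "cis al = cis (psi + s*f)" by (simp add: cis_shift_int)
  hence zc2: "z - c = complex_of_real rho * cis (psi + s*f)" using zc by simp
  define p where "p = rho * sin ((1-s)*f) / (r * sin f)"
  define q where "q = rho * sin (s*f) / (r * sin f)"
  have rho0: "rho \<ge> 0" unfolding rho_def by simp
  have sf1: "(1-s)*f \<le> f" "s*f \<le> f" "0 \<le> (1-s)*f" "0 \<le> s*f"
    using s01 f0 by (auto simp: mult_le_cancel_right1)
  have sn: "sin ((1-s)*f) \<ge> 0" "sin (s*f) \<ge> 0"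
    using sf1 fpi f0 by (intro sin_ge_zero; linarith)+
  have p0: "p \<ge> 0" unfolding p_def using rho0 r sinf sn by (intro divide_nonneg_pos mult_nonneg_nonneg mult_pos_pos) auto
  have q0: "q \<ge> 0" unfolding q_def using rho0 r sinf sn by (intro divide_nonneg_pos mult_nonneg_nonneg mult_pos_pos) auto
  have V1: "reg_vertex k c r theta m - c = complex_of_real r * cis psi"
    unfolding rv_alt psi_def f_def by simp
  have V2: "reg_vertex k c r theta (Suc m) - c = complex_of_real r * cis (psi + f)"
    unfolding rv_alt psi_def f_def by (simp add: algebra_simps add_divide_distrib)
  have zeq: "z = c + complex_of_real p * (reg_vertex k c r theta m - c) + complex_of_real q * (reg_vertex k c r theta (Suc m) - c)"
  proof -
    have "complex_of_real (sin f) * (z - c) = complex_of_real rho * (complex_of_real (sin ((1-s)*f)) * cis psi + complex_of_real (sin (s*f)) * cis (psi + f))"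
      unfolding zc2 sin_cis_identity[symmetric] by (simp add: algebra_simps)
    hence "z - c = complex_of_real p * (complex_of_real r * cis psi) + complex_of_real q * (complex_of_real r * cis (psi + f))"
      unfolding p_def q_def using sinf r
      by (simp add: field_simps)
    thus ?thesis unfolding V1 V2 by (simp add: algebra_simps)
  qed
  define u where "u = cis (theta + (real m + 1/2) * (2*pi/real k))"
  have u: "u = cis (psi + f/2)" unfolding u_def psi_def f_def by (simp add: algebra_simps add_divide_distrib)
  have "inner (z - c) u = p * inner (complex_of_real r * cis psi) u + q * inner (complex_of_real r * cis (psi + f)) u"
    unfolding zeq V1[symmetric] V2[symmetric]
    by (simp add: inner_add_left scaleR_conv_of_real[symmetric] del: scaleR_conv_of_real)
  also have "\<dots> = (p + q) * (r * cos (pi / real k))"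
    unfolding u inner_cis f_def by (simp add: algebra_simps)
  finally show ?thesis using mk p0 q0 zeq unfolding u_def by blast
qed

lemma center_in:
  assumes k: "k \<ge> 4"
  shows "c \<in> regular_polygon k c r theta"
proof -
  define f where "f = 2*pi/real k"
  have kp: "real k > 0" using k by simp
  have f0: "f > 0" unfolding f_def using kp by simp
  have fpi: "f \<le> pi/2"
  proof -
    have "2*pi/real k \<le> 2*pi/4" using k by (intro divide_left_mono) auto
    thus ?thesis unfolding f_def by simp
  qed
  have sinf: "sin f > 0" using f0 fpi by (intro sin_gt_zero) auto
  have ne: "cis f \<noteq> 1" using sinf by (auto simp: complex_eq_iff)
  have "real k * f = 2*pi" unfolding f_def using kp by simp
  hence "cis f ^ k = cis (2*pi)" by (metis Complex.DeMoivre)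
  hence pw: "cis f ^ k = 1" by (simp add: complex_eq_iff)
  have gs: "(\<Sum>j<k. cis f ^ j) = 0" using ne pw by (simp add: sum_gp_strict)
  have "(\<Sum>j<k. cis (theta + real j * f)) = cis theta * (\<Sum>j<k. cis f ^ j)"
    by (simp add: sum_distrib_left Complex.DeMoivre cis_mult mult.commute)
  hence s0: "(\<Sum>j<k. cis (theta + real j * f)) = 0" using gs by simp
  have "(\<Sum>j<k. (1 / real k) *\<^sub>R reg_vertex k c r theta j) \<in> convex hull (reg_vertex k c r theta ` {..<k})"
    by (rule convex_sum) (use kp in \<open>auto intro: hull_inc\<close>)
  moreover have "(\<Sum>j<k. (1 / real k) *\<^sub>R reg_vertex k c r theta j) = c"
  proof -
    have "(\<Sum>j<k. (1 / real k) *\<^sub>R reg_vertex k c r theta j)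
        = (\<Sum>j<k. complex_of_real (1/real k) * c + complex_of_real (r / real k) * cis (theta + real j * f))"
      unfolding rv_alt f_def by (simp add: scaleR_conv_of_real algebra_simps)
    also have "\<dots> = complex_of_real (real k / real k) * c + complex_of_real (r / real k) * (\<Sum>j<k. cis (theta + real j * f))"
      by (simp add: sum.distrib sum_distrib_left)
    also have "\<dots> = c" using s0 kp by simp
    finally show ?thesis .
  qed
  ultimately show ?thesis unfolding regular_polygon_def by simp
qed

lemma sector_tri:
  assumes k: "k \<ge> 4" and r: "r > 0" and p: "p \<ge> 0" "q \<ge> 0" "p + q \<le> 1"
  shows "c + complex_of_real p * (reg_vertex k c r theta m - c) + complex_of_real q * (reg_vertex k c r theta (Suc m) - c)
     \<in> regular_polygon k c r theta"
proof (rule tri_in)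
  show "convex (regular_polygon k c r theta)" unfolding regular_polygon_def by simp
  show "c \<in> regular_polygon k c r theta" using k by (rule center_in)
  have kp: "k > 0" using k by simp
  have "reg_vertex k c r theta (m mod k) \<in> regular_polygon k c r theta"
    unfolding regular_polygon_def using kp by (intro hull_inc) auto
  thus "reg_vertex k c r theta m \<in> regular_polygon k c r theta" using rv_mod[OF kp] by simp
  have "reg_vertex k c r theta (Suc m mod k) \<in> regular_polygon k c r theta"
    unfolding regular_polygon_def using kp by (intro hull_inc) auto
  thus "reg_vertex k c r theta (Suc m) \<in> regular_polygon k c r theta" using rv_mod[OF kp] by simp
qed (use p in auto)

lemma disk_in:
  assumes k: "k \<ge> 4" and r: "r > 0" and z: "cmod (z - c) \<le> r * cos (pi / real k)"
  shows "z \<in> regular_polygon k c r theta"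
proof -
  obtain m p q where m: "m < k" and pq: "p \<ge> 0" "q \<ge> 0"
    and zeq: "z = c + complex_of_real p * (reg_vertex k c r theta m - c) + complex_of_real q * (reg_vertex k c r theta (Suc m) - c)"
    and inn: "inner (z - c) (cis (theta + (real m + 1/2) * (2*pi/real k))) = (p + q) * (r * cos (pi / real k))"
    using sector[OF k r, of z c theta] by blast
  have kp: "real k > 0" using k by simp
  have cpos: "cos (pi / real k) > 0"
  proof (rule cos_gt_zero_pi)
    show "- (pi / 2) < pi / real k" using kp by (smt (verit) divide_pos_pos pi_gt_zero)
    have "pi / real k \<le> pi / 4" using k by (intro divide_left_mono) auto
    thus "pi / real k < pi / 2" using pi_gt_zero by linarith
  qed
  have "(p + q) * (r * cos (pi / real k)) \<le> cmod (z - c) * cmod (cis (theta + (real m + 1/2) * (2*pi/real k)))"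
    unfolding inn[symmetric] by (rule norm_cauchy_schwarz)
  also have "\<dots> \<le> 1 * (r * cos (pi / real k))" using z by simp
  finally have "p + q \<le> 1" using cpos r by (simp add: mult_le_cancel_right)
  thus ?thesis unfolding zeq using sector_tri[OF k r pq] by blast
qed

lemma edge_bound:
  assumes k: "k \<ge> 4" and r: "r > 0"
  shows "cmod (reg_vertex k c r theta (Suc m) - reg_vertex k c r theta m) / 2 \<le> r * cos (pi / real k)"
proof -
  define g where "g = pi / real k"
  define psi where "psi = theta + real m * (2*pi/real k)"
  have kp: "real k > 0" using k by simp
  have g0: "0 < g" "g \<le> pi/4" unfolding g_def using k kp by (auto intro!: divide_left_mono simp: field_simps)
  have cf: "cos (2*g) \<ge> 0" using g0 by (intro cos_ge_zero) auto
  have cg: "cos g \<ge> 0" using g0 by (intro cos_ge_zero) auto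
  have "reg_vertex k c r theta (Suc m) - reg_vertex k c r theta m = complex_of_real r * cis psi * (cis (2*g) - 1)"
    unfolding rv_alt psi_def g_def by (simp add: algebra_simps cis_mult add_divide_distrib)
  hence e: "cmod (reg_vertex k c r theta (Suc m) - reg_vertex k c r theta m) = r * cmod (cis (2*g) - 1)"
    using r by (simp add: norm_mult)
  have "(cmod (cis (2*g) - 1))^2 = (cos (2*g) - 1)^2 + (sin (2*g))^2"
    by (simp add: cmod_def)
  also have "\<dots> = 2 - 2 * cos (2*g)" by (simp add: power2_eq_square algebra_simps sin_squared_eq)
  finally have sq: "(cmod (cis (2*g) - 1))^2 = 4 - 4 * (cos g)^2" by (simp add: cos_double_cos)
  have "(cmod (cis (2*g) - 1) / 2)^2 \<le> (cos g)^2"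
    using sq cf unfolding cos_double_cos by (simp add: power_divide)
  hence "cmod (cis (2*g) - 1) / 2 \<le> cos g" using cg by (rule power2_le_imp_le)
  thus ?thesis unfolding e g_def[symmetric] using r by (simp add: mult_left_mono)
qed

lemma Q_in:
  assumes k: "k \<ge> 4" and r: "r > 0"
  shows "c + (reg_vertex k c r theta (Suc m) - reg_vertex k c r theta m) / 2 \<in> regular_polygon k c r theta"
    and "c + (reg_vertex k c r theta m - reg_vertex k c r theta (Suc m)) / 2 \<in> regular_polygon k c r theta"
proof -
  have b: "cmod (reg_vertex k c r theta (Suc m) - reg_vertex k c r theta m) / 2 \<le> r * cos (pi / real k)"
    by (rule edge_bound[OF k r])
  show "c + (reg_vertex k c r theta (Suc m) - reg_vertex k c r theta m) / 2 \<in> regular_polygon k c r theta"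
    by (rule disk_in[OF k r]) (use b in \<open>simp add: norm_divide\<close>)
  show "c + (reg_vertex k c r theta m - reg_vertex k c r theta (Suc m)) / 2 \<in> regular_polygon k c r theta"
    by (rule disk_in[OF k r]) (use b in \<open>simp add: norm_divide norm_minus_commute\<close>)
qed

lemma vert_in:
  assumes "k > 0" shows "reg_vertex k c r theta m \<in> regular_polygon k c r theta"
proof -
  have "reg_vertex k c r theta (m mod k) \<in> regular_polygon k c r theta"
    unfolding regular_polygon_def using assms by (intro hull_inc) auto
  thus ?thesis using rv_mod[OF assms] by simp
qed

lemma hom_sub:
  assumes "convex S" "p \<in> S" "0 \<le> lam" "lam \<le> 1"
  shows "homothety p lam ` S \<subseteq> S"
proof
  fix x assume "x \<in> homothety p lam ` S"
  then obtain y where y: "y \<in> S" "x = homothety p lam y" by auto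
  have "p + complex_of_real lam * (y - p) + complex_of_real 0 * (p - p) \<in> S"
    by (rule tri_in) (use assms y in auto)
  thus "x \<in> S" using y unfolding homothety_def by simp
qed

theorem lemma9:
  fixes k j :: nat and c :: complex and r theta :: real
  assumes "k \<ge> 4" and "r > 0"
    and "2 ^ j \<le> enclosing_diameter (regular_polygon k c r theta)"
    and "enclosing_diameter (regular_polygon k c r theta) < 2 ^ (j + 1)"
  shows "regular_polygon k c r theta = \<Union> (shrunk_set k c r theta j)"
proof -
  note k = assms(1) and r = assms(2)
  define S where "S = regular_polygon k c r theta"
  define w where "w = enclosing_diameter S"
  define lam where "lam = (2::real) ^ j / w"
  have kp: "k > 0" using k by simp
  have cS: "convex S" unfolding S_def regular_polygon_def by simp
  have w0: "w > 0" using assms(3) unfolding w_def S_def by (smt (verit) zero_less_power)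
  have lam1: "lam \<le> 1" unfolding lam_def using w0 assms(3) unfolding w_def S_def by simp
  have lam2: "1/2 < lam" unfolding lam_def using w0 assms(4) unfolding w_def S_def
    by (simp add: field_simps)
  show ?thesis
  proof (cases "w = 2 ^ j")
    case True
    thus ?thesis unfolding shrunk_set_def Let_def w_def S_def by simp
  next
    case False
    have sh: "shrunk_set k c r theta j = insert (homothety c lam ` S)
                ((\<lambda>i. homothety (reg_vertex k c r theta i) lam ` S) ` {..<k})"
      unfolding shrunk_set_def Let_def S_def[symmetric] w_def[symmetric] lam_def[symmetric] using False by simp
    have "S = \<Union> (insert (homothety c lam ` S) ((\<lambda>i. homothety (reg_vertex k c r theta i) lam ` S) ` {..<k}))"
    proof
      show "\<Union> (insert (homothety c lam ` S) ((\<lambda>i. homothety (reg_vertex k c r theta i) lam ` S) ` {..<k})) \<subseteq> S"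
      proof -
        have l0: "0 \<le> lam" using lam2 by simp
        have "homothety c lam ` S \<subseteq> S" using hom_sub[OF cS _ l0 lam1] center_in[OF k] unfolding S_def by blast
        moreover have "homothety (reg_vertex k c r theta i) lam ` S \<subseteq> S" for i
          using hom_sub[OF cS _ l0 lam1] vert_in[OF kp] unfolding S_def by blast
        ultimately show ?thesis by blast
      qed
    next
      show "S \<subseteq> \<Union> (insert (homothety c lam ` S) ((\<lambda>i. homothety (reg_vertex k c r theta i) lam ` S) ` {..<k}))"
      proof
        fix x assume x: "x \<in> S"
        obtain m p q where m: "m < k" and pq: "p \<ge> 0" "q \<ge> 0"
          and xeq: "x = c + complex_of_real p * (reg_vertex k c r theta m - c) + complex_of_real q * (reg_vertex k c r theta (Suc m) - c)"
          and inn: "inner (x - c) (cis (theta + (real m + 1/2) * (2*pi/real k))) = (p + q) * (r * cos (pi / real k))"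
          using sector[OF k r, of x c theta] by blast
        have cpos: "cos (pi / real k) > 0"
        proof (rule cos_gt_zero_pi)
          show "- (pi / 2) < pi / real k" using kp by (smt (verit) divide_pos_pos pi_gt_zero of_nat_0_less_iff)
          have "pi / real k \<le> pi / 4" using k by (intro divide_left_mono) auto
          thus "pi / real k < pi / 2" using pi_gt_zero by linarith
        qed
        have "(p + q) * (r * cos (pi / real k)) \<le> 1 * (r * cos (pi / real k))"
          using halfplane[of k r m x c theta] k r m x inn unfolding S_def by simp
        hence pq1: "p + q \<le> 1" using cpos r by (simp add: mult_le_cancel_right)
        define V where "V = reg_vertex k c r theta m"
        define W where "W = reg_vertex k c r theta (Suc m)"
        have VS: "V \<in> S" "W \<in> S" unfolding V_def W_def S_def using vert_in[OF kp] by auto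
        have cS': "c \<in> S" unfolding S_def using center_in[OF k] .
        have Q: "c + (W - V) / 2 \<in> S" "c + (V - W) / 2 \<in> S"
          unfolding V_def W_def S_def using Q_in[OF k r] by auto
        have W': "W = reg_vertex k c r theta (Suc m mod k)" unfolding W_def using rv_mod[OF kp] by simp
        have Wk: "Suc m mod k \<in> {..<k}" using kp by simp
        show "x \<in> \<Union> (insert (homothety c lam ` S) ((\<lambda>i. homothety (reg_vertex k c r theta i) lam ` S) ` {..<k}))"
        proof (cases "q \<le> p")
          case True
          have "x \<in> homothety c lam ` S \<or> x \<in> homothety V lam ` S"
            by (rule cover[where a=p and b=q, OF cS cS' VS(1) VS(2) Q(1) pq(2) True _ lam2 lam1])
               (use pq1 xeq in \<open>auto simp: V_def W_def add_ac\<close>)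
          thus ?thesis using m unfolding V_def by blast
        next
          case False
          have "x \<in> homothety c lam ` S \<or> x \<in> homothety W lam ` S"
            by (rule cover[where a=q and b=p, OF cS cS' VS(2) VS(1) Q(2) pq(1) _ _ lam2 lam1])
               (use pq1 xeq False in \<open>auto simp: V_def W_def algebra_simps\<close>)
          thus ?thesis using Wk unfolding W' by blast
        qed
      qed
    qed
    thus ?thesis unfolding sh S_def .
  qed
qed

end
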